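(* Let $X\in\mathbb{Z}^{d\times N}$ be a matrix of full rank $d$ representing an arithmetic matroid $\mathcal{A}$, and suppose $X$ is in $B$-basic form, $X=(B\,|\,A)$ with $B\in\mathbb{Z}^{d\times d}$ a diagonal matrix of full rank with non-negative entries and $A\in\mathbb{Z}^{d\times(N-d)}$. Suppose that $X'=(B\,|\,A')\in\mathbb{Z}^{d\times N}$ represents the same arithmetic matroid $\mathcal{A}$. Then $|a_{ij}|=|a'_{ij}|$ for all entries, i.e. the entries of $A$ and $A'$ are equal up to sign.
   Context: The arithmetic matroid represented by $X\in\mathbb{Z}^{d\times N}$ with columns $x_1,\dots,x_N$ is $([N],\operatorname{rk},m)$ where $\operatorname{rk}(S)$ is the dimension of the real span $\langle S\rangle_{\mathbb{R}}$ of $\{x_e:e\in S\}$ and $m(S)=|(\langle S\rangle_{\mathbb{R}}\cap\mathbb{Z}^d)/\langle S\rangle|$, with $\langle S\rangle$ the subgroup of $\mathbb{Z}^d$ generated by $\{x_e:e\in S\}$. Two matrices represent the same arithmetic matroid if these rank and multiplicity functions coincide. *)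

theory Defs
  imports Complex_Main
begin

text \<open>An integer d x N matrix X is represented as a function nat => nat => int,
  where only the entries X i e with i < d and e < N matter.\<close>

definition cols_indep :: "nat \<Rightarrow> (nat \<Rightarrow> nat \<Rightarrow> int) \<Rightarrow> nat set \<Rightarrow> bool" where
  "cols_indep d X T \<longleftrightarrow>
     (\<forall>c :: nat \<Rightarrow> real. (\<forall>i<d. (\<Sum>e\<in>T. c e * real_of_int (X i e)) = 0) \<longrightarrow> (\<forall>e\<in>T. c e = 0))"

definition mat_rk :: "nat \<Rightarrow> (nat \<Rightarrow> nat \<Rightarrow> int) \<Rightarrow> nat set \<Rightarrow> nat" where
  "mat_rk d X S = Max (card ` {T. T \<subseteq> S \<and> cols_indep d X T})"

definition span_lattice_pts :: "nat \<Rightarrow> (nat \<Rightarrow> nat \<Rightarrow> int) \<Rightarrow> nat set \<Rightarrow> (nat \<Rightarrow> int) set" where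
  "span_lattice_pts d X S = {z. (\<forall>i\<ge>d. z i = 0) \<and>
     (\<exists>c :: nat \<Rightarrow> real. \<forall>i<d. real_of_int (z i) = (\<Sum>e\<in>S. c e * real_of_int (X i e)))}"

definition gen_group :: "nat \<Rightarrow> (nat \<Rightarrow> nat \<Rightarrow> int) \<Rightarrow> nat set \<Rightarrow> (nat \<Rightarrow> int) set" where
  "gen_group d X S = {z. (\<forall>i\<ge>d. z i = 0) \<and>
     (\<exists>c :: nat \<Rightarrow> int. \<forall>i<d. z i = (\<Sum>e\<in>S. c e * X i e))}"

text \<open>m(S): order of the quotient group (span_R(S) \<inter> Z^d) / <S>,
  computed as the number of cosets z + <S>.\<close>
definition mat_mult :: "nat \<Rightarrow> (nat \<Rightarrow> nat \<Rightarrow> int) \<Rightarrow> nat set \<Rightarrow> nat" where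
  "mat_mult d X S = card ((\<lambda>z. (\<lambda>g. (\<lambda>i. z i + g i)) ` gen_group d X S) ` span_lattice_pts d X S)"

definition same_arith_matroid :: "nat \<Rightarrow> nat \<Rightarrow> (nat \<Rightarrow> nat \<Rightarrow> int) \<Rightarrow> (nat \<Rightarrow> nat \<Rightarrow> int) \<Rightarrow> bool" where
  "same_arith_matroid d N X X' \<longleftrightarrow>
     (\<forall>S. S \<subseteq> {..<N} \<longrightarrow> mat_rk d X S = mat_rk d X' S \<and> mat_mult d X S = mat_mult d X' S)"

end

theory Submission
  imports Defs "HOL-Library.FuncSet"
begin

lemma sum_only:
  assumes "finite A" "\<forall>e\<in>A. e \<noteq> r \<longrightarrow> f e = 0"
  shows "sum f A = (if r \<in> A then f r else (0::'a::comm_monoid_add))"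
proof (cases "r \<in> A")
  case True
  have "sum f A = f r + sum f (A - {r})" by (rule sum.remove[OF assms(1) True])
  moreover have "sum f (A - {r}) = 0" using assms(2) by (intro sum.neutral) blast
  ultimately show ?thesis using True by simp
next
  case False
  have "sum f A = 0" using assms(2) False by (intro sum.neutral) metis
  then show ?thesis using False by simp
qed

definition Sset :: "nat \<Rightarrow> nat \<Rightarrow> nat \<Rightarrow> nat set" where
  "Sset d i j = insert j ({..<d} - {i})"

lemma finite_Sset: "finite (Sset d i j)" by (simp add: Sset_def)

lemma card_Sset: "i < d \<Longrightarrow> d \<le> j \<Longrightarrow> card (Sset d i j) = d"
  by (simp add: Sset_def card_Diff_singleton)

lemma sumS: "d \<le> j \<Longrightarrow> (\<Sum>e\<in>Sset d i j. f e) = f j + (\<Sum>e\<in>{..<d}-{i}. f e)"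
  by (simp add: Sset_def)

lemma rk_ge:
  assumes "finite S" "cols_indep d Y S"
  shows "card S \<le> mat_rk d Y S"
proof -
  have fin: "finite {T. T \<subseteq> S \<and> cols_indep d Y T}" using assms(1) by simp
  have "card S \<in> card ` {T. T \<subseteq> S \<and> cols_indep d Y T}" using assms(2) by blast
  then show ?thesis unfolding mat_rk_def
    using fin by (intro Max_ge) auto
qed

lemma rk_lt:
  assumes "finite S" "\<And>T. T \<subseteq> S \<Longrightarrow> cols_indep d Y T \<Longrightarrow> card T < n"
  shows "mat_rk d Y S < n"
proof -
  have fin: "finite {T. T \<subseteq> S \<and> cols_indep d Y T}" using assms(1) by simp
  have ne: "{} \<in> {T. T \<subseteq> S \<and> cols_indep d Y T}" by (simp add: cols_indep_def)
  have all: "\<forall>a\<in>card ` {T. T \<subseteq> S \<and> cols_indep d Y T}. a < n" using assms(2) by blast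
  have ne': "card ` {T. T \<subseteq> S \<and> cols_indep d Y T} \<noteq> {}" using ne by blast
  show ?thesis unfolding mat_rk_def
    using Max_less_iff[OF finite_imageI[OF fin] ne'] all by blast
qed

context
  fixes d :: nat and Y :: "nat \<Rightarrow> nat \<Rightarrow> int" and i j :: nat
  assumes diag: "\<forall>r<d. \<forall>k<d. r \<noteq> k \<longrightarrow> Y r k = 0"
    and pos: "\<forall>k<d. Y k k > 0"
    and i: "i < d" and j: "d \<le> j"
begin

lemma rowsum_real:
  assumes r: "r < d"
  shows "(\<Sum>e\<in>{..<d}-{i}. c e * real_of_int (Y r e)) = (if r = i then 0 else c r * Y r r)"
proof -
  have "(\<Sum>e\<in>{..<d}-{i}. c e * real_of_int (Y r e)) = (if r \<in> {..<d}-{i} then c r * real_of_int (Y r r) else 0)"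
    by (rule sum_only) (use diag r in auto)
  then show ?thesis using r by auto
qed

lemma rowsum_int:
  assumes r: "r < d"
  shows "(\<Sum>e\<in>{..<d}-{i}. c e * Y r e) = (if r = i then 0 else c r * Y r r)"
proof -
  have "(\<Sum>e\<in>{..<d}-{i}. c e * Y r e) = (if r \<in> {..<d}-{i} then c r * Y r r else 0)"
    by (rule sum_only) (use diag r in auto)
  then show ?thesis using r by auto
qed

lemma indep_S:
  assumes "Y i j \<noteq> 0"
  shows "cols_indep d Y (Sset d i j)"
  unfolding cols_indep_def
proof (intro allI impI ballI)
  fix c :: "nat \<Rightarrow> real" and e
  assume h: "\<forall>r<d. (\<Sum>e\<in>Sset d i j. c e * real_of_int (Y r e)) = 0" and e: "e \<in> Sset d i j"
  have row: "c j * Y r j + (if r = i then 0 else c r * Y r r) = 0" if "r < d" for r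
  proof -
    have "(\<Sum>e\<in>Sset d i j. c e * real_of_int (Y r e)) = c j * Y r j + (\<Sum>e\<in>{..<d}-{i}. c e * real_of_int (Y r e))"
      by (rule sumS[OF j])
    then show ?thesis using h that rowsum_real[OF that, of c] by simp
  qed
  have cj: "c j = 0" using row[OF i] assms by simp
  show "c e = 0"
  proof (cases "e = j")
    case True then show ?thesis using cj by simp
  next
    case False
    then have "e < d" "e \<noteq> i" using e by (auto simp: Sset_def)
    then show ?thesis using row[of e] cj pos by auto
  qed
qed

lemma not_indep_S:
  assumes "Y i j = 0"
  shows "\<not> cols_indep d Y (Sset d i j)"
proof
  assume ind: "cols_indep d Y (Sset d i j)"
  define c :: "nat \<Rightarrow> real" where "c e = (if e = j then -1 else Y e j / Y e e)" for e
  have "\<forall>r<d. (\<Sum>e\<in>Sset d i j. c e * real_of_int (Y r e)) = 0"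
  proof (intro allI impI)
    fix r assume r: "r < d"
    have "r \<noteq> j" using r j by auto
    have "Y r r > 0" using pos r by auto
    have "(\<Sum>e\<in>Sset d i j. c e * real_of_int (Y r e)) = c j * Y r j + (\<Sum>e\<in>{..<d}-{i}. c e * real_of_int (Y r e))"
      by (rule sumS[OF j])
    also have "\<dots> = c j * Y r j + (if r = i then 0 else c r * Y r r)" using rowsum_real[OF r, of c] by simp
    also have "\<dots> = 0"
    proof (cases "r = i")
      case True then show ?thesis using assms by simp
    next
      case False
      have "c j = -1" "c r = Y r j / Y r r" using \<open>r \<noteq> j\<close> by (simp_all add: c_def)
      then show ?thesis using False \<open>Y r r > 0\<close> by simp
    qed
    finally show "(\<Sum>e\<in>Sset d i j. c e * real_of_int (Y r e)) = 0" .
  qed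
  moreover have "j \<in> Sset d i j" by (simp add: Sset_def)
  ultimately have "c j = 0" using ind unfolding cols_indep_def by blast
  moreover have "c j = -1" by (simp add: c_def)
  ultimately show False by simp
qed

lemma rk_S_lt:
  assumes "Y i j = 0"
  shows "mat_rk d Y (Sset d i j) < d"
proof (rule rk_lt[OF finite_Sset])
  fix T assume T: "T \<subseteq> Sset d i j" "cols_indep d Y T"
  have le: "card T \<le> d" using card_mono[OF finite_Sset T(1)] card_Sset[OF i j] by simp
  show "card T < d"
  proof (rule ccontr)
    assume "\<not> card T < d"
    then have "T = Sset d i j" using card_subset_eq[OF finite_Sset T(1)] card_Sset[OF i j] le by simp
    then show False using T(2) not_indep_S[OF assms] by simp
  qed
qed

lemma rk_S_ge:
  assumes "Y i j \<noteq> 0"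
  shows "d \<le> mat_rk d Y (Sset d i j)"
  using rk_ge[OF finite_Sset indep_S[OF assms]] card_Sset[OF i j] by simp


lemma rowS_int:
  assumes r: "r < d"
  shows "(\<Sum>e\<in>Sset d i j. c e * Y r e) = c j * Y r j + (if r = i then 0 else c r * Y r r)"
proof -
  have "(\<Sum>e\<in>Sset d i j. c e * Y r e) = c j * Y r j + (\<Sum>e\<in>{..<d}-{i}. c e * Y r e)"
    by (rule sumS[OF j])
  then show ?thesis using rowsum_int[OF r, of c] by simp
qed

lemma rowS_real:
  assumes r: "r < d"
  shows "(\<Sum>e\<in>Sset d i j. c e * real_of_int (Y r e)) = c j * Y r j + (if r = i then 0 else c r * Y r r)"
proof -
  have "(\<Sum>e\<in>Sset d i j. c e * real_of_int (Y r e)) = c j * Y r j + (\<Sum>e\<in>{..<d}-{i}. c e * real_of_int (Y r e))"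
    by (rule sumS[OF j])
  then show ?thesis using rowsum_real[OF r, of c] by simp
qed

lemma G_mem:
  "g \<in> gen_group d Y (Sset d i j) \<longleftrightarrow> (\<forall>r\<ge>d. g r = 0) \<and>
     (\<exists>c. \<forall>r<d. g r = c j * Y r j + (if r = i then 0 else c r * Y r r))"
  unfolding gen_group_def using rowS_int by simp

lemma G_add:
  assumes "g \<in> gen_group d Y (Sset d i j)" "h \<in> gen_group d Y (Sset d i j)"
  shows "(\<lambda>r. g r + h r) \<in> gen_group d Y (Sset d i j)"
proof -
  obtain c where c: "\<forall>r<d. g r = c j * Y r j + (if r = i then 0 else c r * Y r r)" "\<forall>r\<ge>d. g r = 0"
    using assms(1) unfolding G_mem by blast
  obtain c' where c': "\<forall>r<d. h r = c' j * Y r j + (if r = i then 0 else c' r * Y r r)" "\<forall>r\<ge>d. h r = 0"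
    using assms(2) unfolding G_mem by blast
  have "\<exists>c. \<forall>r<d. g r + h r = c j * Y r j + (if r = i then 0 else c r * Y r r)"
    apply (rule exI[where x="\<lambda>e. c e + c' e"])
    using c(1) c'(1) by (simp add: algebra_simps)
  moreover have "\<forall>r\<ge>d. g r + h r = 0" using c(2) c'(2) by simp
  ultimately show ?thesis by (simp only: G_mem)
qed

lemma G_neg:
  assumes "g \<in> gen_group d Y (Sset d i j)"
  shows "(\<lambda>r. - g r) \<in> gen_group d Y (Sset d i j)"
proof -
  obtain c where c: "\<forall>r<d. g r = c j * Y r j + (if r = i then 0 else c r * Y r r)" "\<forall>r\<ge>d. g r = 0"
    using assms(1) unfolding G_mem by blast
  have "\<exists>c. \<forall>r<d. - g r = c j * Y r j + (if r = i then 0 else c r * Y r r)"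
    apply (rule exI[where x="\<lambda>e. - c e"])
    using c(1) by simp
  moreover have "\<forall>r\<ge>d. - g r = 0" using c(2) by simp
  ultimately show ?thesis by (simp only: G_mem)
qed

lemma G_zero: "(\<lambda>r. 0) \<in> gen_group d Y (Sset d i j)"
proof -
  have "\<exists>c. \<forall>r<d. (0::int) = c j * Y r j + (if r = i then 0 else c r * Y r r)"
    by (rule exI[where x="\<lambda>e. 0"]) simp
  then show ?thesis by (simp only: G_mem) simp
qed

lemma V_L:
  assumes a: "Y i j \<noteq> 0" and z: "\<forall>r\<ge>d. z r = 0"
  shows "z \<in> span_lattice_pts d Y (Sset d i j)"
proof -
  define q :: real where "q = z i / Y i j"
  define c :: "nat \<Rightarrow> real" where "c e = (if e = j then q else (z e - q * Y e j) / Y e e)" for e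
  have "\<forall>r<d. real_of_int (z r) = (\<Sum>e\<in>Sset d i j. c e * real_of_int (Y r e))"
  proof (intro allI impI)
    fix r assume r: "r < d"
    have rj: "r \<noteq> j" using r j by auto
    have pr: "Y r r > 0" using pos r by auto
    have cj: "c j = q" by (simp add: c_def)
    have cr: "c r = (z r - q * Y r j) / Y r r" using rj by (simp add: c_def)
    show "real_of_int (z r) = (\<Sum>e\<in>Sset d i j. c e * real_of_int (Y r e))"
      unfolding rowS_real[OF r] cj
    proof (cases "r = i")
      case True then show "real_of_int (z r) = q * Y r j + (if r = i then 0 else c r * Y r r)"
        using a by (simp add: q_def)
    next
      case False then show "real_of_int (z r) = q * Y r j + (if r = i then 0 else c r * Y r r)"
        using pr cr by simp
    qed
  qed
  then show ?thesis unfolding span_lattice_pts_def using z by blast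
qed

lemma small_mult: "\<bar>c * a\<bar> < \<bar>a\<bar> \<Longrightarrow> c = (0::int)"
proof (rule ccontr)
  assume h: "\<bar>c * a\<bar> < \<bar>a\<bar>" "c \<noteq> 0"
  then have "1 \<le> \<bar>c\<bar>" by simp
  then have "\<bar>a\<bar> \<le> \<bar>c\<bar> * \<bar>a\<bar>" by (simp add: mult_le_cancel_right1)
  then show False using h by (simp add: abs_mult)
qed


lemma decomp:
  assumes a: "Y i j \<noteq> 0" and z: "\<forall>r\<ge>d. z r = 0"
  shows "\<exists>\<rho>. (\<forall>r\<ge>d. \<rho> r = 0) \<and> 0 \<le> \<rho> i \<and> \<rho> i < \<bar>Y i j\<bar> \<and>
           (\<forall>r<d. r \<noteq> i \<longrightarrow> 0 \<le> \<rho> r \<and> \<rho> r < Y r r) \<and>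
           (\<lambda>r. z r - \<rho> r) \<in> gen_group d Y (Sset d i j)"
proof -
  define q where "q = (z i div \<bar>Y i j\<bar>) * sgn (Y i j)"
  define w where "w r = z r - q * Y r j" for r
  define \<rho> where "\<rho> r = (if r < d then (if r = i then z i mod \<bar>Y i j\<bar> else w r mod Y r r) else 0)" for r
  define c where "c e = (if e = j then q else w e div Y e e)" for e
  have aa: "\<bar>Y i j\<bar> > 0" using a by simp
  have qa: "q * Y i j = (z i div \<bar>Y i j\<bar>) * \<bar>Y i j\<bar>"
    unfolding q_def by (simp add: abs_sgn mult.assoc mult.commute[of "sgn (Y i j)"])
  have "\<exists>c. \<forall>r<d. z r - \<rho> r = c j * Y r j + (if r = i then 0 else c r * Y r r)"
  proof (rule exI[where x=c], intro allI impI)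
    fix r assume r: "r < d"
    have cj: "c j = q" by (simp add: c_def)
    have rj: "r \<noteq> j" using r j by auto
    show "z r - \<rho> r = c j * Y r j + (if r = i then 0 else c r * Y r r)"
    proof (cases "r = i")
      case True
      then show ?thesis using r cj qa by (simp add: \<rho>_def minus_mod_eq_mult_div)
    next
      case False
      have "c r * Y r r = w r - w r mod Y r r" using rj by (simp add: c_def minus_mod_eq_div_mult)
      then show ?thesis using False r cj by (simp add: \<rho>_def w_def)
    qed
  qed
  moreover have "\<forall>r\<ge>d. z r - \<rho> r = 0" using z by (simp add: \<rho>_def)
  ultimately have G: "(\<lambda>r. z r - \<rho> r) \<in> gen_group d Y (Sset d i j)" by (simp only: G_mem)
  have "\<forall>r<d. r \<noteq> i \<longrightarrow> 0 \<le> \<rho> r \<and> \<rho> r < Y r r" using pos by (simp add: \<rho>_def)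
  moreover have "0 \<le> \<rho> i" "\<rho> i < \<bar>Y i j\<bar>" using aa i by (simp_all add: \<rho>_def)
  moreover have "\<forall>r\<ge>d. \<rho> r = 0" by (simp add: \<rho>_def)
  ultimately show ?thesis using G by blast
qed

lemma uniq:
  assumes a: "Y i j \<noteq> 0"
    and r1: "\<forall>r\<ge>d. \<rho> r = 0" "0 \<le> \<rho> i" "\<rho> i < \<bar>Y i j\<bar>" "\<forall>r<d. r \<noteq> i \<longrightarrow> 0 \<le> \<rho> r \<and> \<rho> r < Y r r"
    and r2: "\<forall>r\<ge>d. \<rho>' r = 0" "0 \<le> \<rho>' i" "\<rho>' i < \<bar>Y i j\<bar>" "\<forall>r<d. r \<noteq> i \<longrightarrow> 0 \<le> \<rho>' r \<and> \<rho>' r < Y r r"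
    and g: "(\<lambda>r. \<rho>' r - \<rho> r) \<in> gen_group d Y (Sset d i j)"
  shows "\<rho>' = \<rho>"
proof -
  obtain c where c: "\<forall>r<d. \<rho>' r - \<rho> r = c j * Y r j + (if r = i then 0 else c r * Y r r)"
    using g unfolding G_mem by blast
  have "\<bar>c j * Y i j\<bar> < \<bar>Y i j\<bar>" using c i r1 r2 by auto
  then have cj: "c j = 0" by (rule small_mult)
  show ?thesis
  proof
    fix r
    show "\<rho>' r = \<rho> r"
    proof (cases "r < d")
      case False then show ?thesis using r1 r2 by simp
    next
      case True
      show ?thesis
      proof (cases "r = i")
        case True then show ?thesis using c cj i by auto
      next
        case False
        have e: "\<rho>' r - \<rho> r = c r * Y r r" using c cj \<open>r < d\<close> False by auto
        have b1: "0 \<le> \<rho> r" "\<rho> r < Y r r" using r1(4) \<open>r < d\<close> False by auto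
        have b2: "0 \<le> \<rho>' r" "\<rho>' r < Y r r" using r2(4) \<open>r < d\<close> False by auto
        have "\<bar>\<rho>' r - \<rho> r\<bar> < \<bar>Y r r\<bar>" using b1 b2 by linarith
        then have "\<bar>c r * Y r r\<bar> < \<bar>Y r r\<bar>" using e by simp
        then have "c r = 0" by (rule small_mult)
        then show ?thesis using e by simp
      qed
    qed
  qed
qed


lemma card_R:
  assumes a: "Y i j \<noteq> 0"
  shows "card {\<rho>. (\<forall>r\<ge>d. \<rho> r = 0) \<and> 0 \<le> \<rho> i \<and> \<rho> i < \<bar>Y i j\<bar> \<and>
           (\<forall>r<d. r \<noteq> i \<longrightarrow> 0 \<le> \<rho> r \<and> \<rho> r < Y r r)}
         = nat \<bar>Y i j\<bar> * (\<Prod>k\<in>{..<d}-{i}. nat (Y k k))" (is "card ?R = _")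
proof -
  define A where "A r = (if r = i then {0..<\<bar>Y i j\<bar>} else {0..<Y r r})" for r
  define ext :: "(nat \<Rightarrow> int) \<Rightarrow> nat \<Rightarrow> int" where "ext f = (\<lambda>r. if r < d then f r else 0)" for f
  have memA: "\<rho> \<in> ?R \<longleftrightarrow> (\<forall>r\<ge>d. \<rho> r = 0) \<and> (\<forall>r<d. \<rho> r \<in> A r)" for \<rho>
    using i by (auto simp: A_def)
  have R_eq: "?R = ext ` PiE {..<d} A"
  proof
    show "?R \<subseteq> ext ` PiE {..<d} A"
    proof
      fix \<rho> assume h: "\<rho> \<in> ?R"
      have "\<rho> = ext (restrict \<rho> {..<d})"
        using h unfolding memA by (auto simp: ext_def)
      moreover have "restrict \<rho> {..<d} \<in> PiE {..<d} A" using h unfolding memA by auto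
      ultimately show "\<rho> \<in> ext ` PiE {..<d} A" by blast
    qed
  next
    show "ext ` PiE {..<d} A \<subseteq> ?R"
    proof
      fix \<rho> assume "\<rho> \<in> ext ` PiE {..<d} A"
      then obtain f where f: "f \<in> PiE {..<d} A" "\<rho> = ext f" by blast
      have "(\<forall>r\<ge>d. \<rho> r = 0) \<and> (\<forall>r<d. \<rho> r \<in> A r)" using f by (auto simp: ext_def)
      then show "\<rho> \<in> ?R" unfolding memA .
    qed
  qed
  have inj: "inj_on ext (PiE {..<d} A)"
  proof (rule inj_onI)
    fix f f' assume f: "f \<in> PiE {..<d} A" "f' \<in> PiE {..<d} A" "ext f = ext f'"
    show "f = f'"
    proof (rule PiE_ext[OF f(1) f(2)])
      fix r assume "r \<in> {..<d}"
      then show "f r = f' r" using fun_cong[OF f(3), of r] by (simp add: ext_def)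
    qed
  qed
  have "card ?R = card (PiE {..<d} A)" unfolding R_eq by (rule card_image[OF inj])
  also have "\<dots> = (\<Prod>r\<in>{..<d}. card (A r))" by (rule card_PiE) simp
  also have "\<dots> = card (A i) * (\<Prod>r\<in>{..<d}-{i}. card (A r))"
    using i by (intro prod.remove) auto
  also have "(\<Prod>r\<in>{..<d}-{i}. card (A r)) = (\<Prod>k\<in>{..<d}-{i}. nat (Y k k))"
    by (rule prod.cong) (auto simp: A_def)
  also have "card (A i) = nat \<bar>Y i j\<bar>" by (simp add: A_def)
  finally show ?thesis .
qed

lemma mult_S:
  assumes a: "Y i j \<noteq> 0"
  shows "mat_mult d Y (Sset d i j) = nat \<bar>Y i j\<bar> * (\<Prod>k\<in>{..<d}-{i}. nat (Y k k))"
proof -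
  define G where "G = gen_group d Y (Sset d i j)"
  define L where "L = span_lattice_pts d Y (Sset d i j)"
  define cs where "cs z = (\<lambda>g. (\<lambda>r. z r + g r)) ` G" for z :: "nat \<Rightarrow> int"
  define R where "R = {\<rho>. (\<forall>r\<ge>d. \<rho> r = 0) \<and> 0 \<le> \<rho> i \<and> \<rho> i < \<bar>Y i j\<bar> \<and>
           (\<forall>r<d. r \<noteq> i \<longrightarrow> 0 \<le> \<rho> r \<and> \<rho> r < Y r r)}"
  have mm: "mat_mult d Y (Sset d i j) = card (cs ` L)"
    unfolding mat_mult_def cs_def G_def L_def by simp
  have shift: "cs (\<lambda>r. z r + g r) = cs z" if g: "g \<in> G" for z g
  proof
    show "cs (\<lambda>r. z r + g r) \<subseteq> cs z"
    proof
      fix x assume "x \<in> cs (\<lambda>r. z r + g r)"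
      then obtain h where h: "h \<in> G" "x = (\<lambda>r. z r + g r + h r)" unfolding cs_def by blast
      have "(\<lambda>r. g r + h r) \<in> G" using G_add g h(1) unfolding G_def by blast
      moreover have "x = (\<lambda>r. z r + (g r + h r))" using h(2) by (simp add: add.assoc)
      ultimately show "x \<in> cs z" unfolding cs_def by (intro image_eqI[where x="\<lambda>r. g r + h r"]) auto
    qed
  next
    show "cs z \<subseteq> cs (\<lambda>r. z r + g r)"
    proof
      fix x assume "x \<in> cs z"
      then obtain h where h: "h \<in> G" "x = (\<lambda>r. z r + h r)" unfolding cs_def by blast
      have "(\<lambda>r. - g r) \<in> G" using G_neg g unfolding G_def by blast
      then have "(\<lambda>r. h r + - g r) \<in> G" using G_add h(1) unfolding G_def by blast
      moreover have "x = (\<lambda>r. z r + g r + (h r + - g r))" using h(2) by simp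
      ultimately show "x \<in> cs (\<lambda>r. z r + g r)" unfolding cs_def by (intro image_eqI[where x="\<lambda>r. h r + - g r"]) auto
    qed
  qed
  have RL: "R \<subseteq> L" unfolding R_def L_def using V_L[OF a] by blast
  have img: "cs ` L = cs ` R"
  proof
    show "cs ` R \<subseteq> cs ` L" using RL by blast
  next
    show "cs ` L \<subseteq> cs ` R"
    proof
      fix x assume "x \<in> cs ` L"
      then obtain z where z: "z \<in> L" "x = cs z" by blast
      have zt: "\<forall>r\<ge>d. z r = 0" using z(1) unfolding L_def span_lattice_pts_def by blast
      obtain \<rho> where \<rho>: "\<rho> \<in> R" "(\<lambda>r. z r - \<rho> r) \<in> G"
        using decomp[OF a zt] unfolding R_def G_def by blast
      have "cs (\<lambda>r. \<rho> r + (z r - \<rho> r)) = cs \<rho>" by (rule shift[OF \<rho>(2)])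
      then have "cs z = cs \<rho>" by simp
      then show "x \<in> cs ` R" using z(2) \<rho>(1) by blast
    qed
  qed
  have inj: "inj_on cs R"
  proof (rule inj_onI)
    fix \<rho> \<rho>' assume h: "\<rho> \<in> R" "\<rho>' \<in> R" "cs \<rho> = cs \<rho>'"
    have "(\<lambda>r. 0) \<in> G" using G_zero unfolding G_def .
    then have "\<rho>' \<in> cs \<rho>'" unfolding cs_def by (intro image_eqI[where x="\<lambda>r. 0"]) auto
    then have "\<rho>' \<in> cs \<rho>" using h(3) by simp
    then obtain g where g: "g \<in> G" "\<rho>' = (\<lambda>r. \<rho> r + g r)" unfolding cs_def by blast
    have "(\<lambda>r. \<rho>' r - \<rho> r) = g" using g(2) by auto
    then have gg: "(\<lambda>r. \<rho>' r - \<rho> r) \<in> gen_group d Y (Sset d i j)" using g(1) unfolding G_def by simp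
    have r1: "\<forall>r\<ge>d. \<rho> r = 0" "0 \<le> \<rho> i" "\<rho> i < \<bar>Y i j\<bar>" "\<forall>r<d. r \<noteq> i \<longrightarrow> 0 \<le> \<rho> r \<and> \<rho> r < Y r r"
      using h(1) unfolding R_def by auto
    have r2: "\<forall>r\<ge>d. \<rho>' r = 0" "0 \<le> \<rho>' i" "\<rho>' i < \<bar>Y i j\<bar>" "\<forall>r<d. r \<noteq> i \<longrightarrow> 0 \<le> \<rho>' r \<and> \<rho>' r < Y r r"
      using h(2) unfolding R_def by auto
    show "\<rho> = \<rho>'" using uniq[OF a r1 r2 gg] by simp
  qed
  have "mat_mult d Y (Sset d i j) = card R" unfolding mm img using card_image[OF inj] .
  also have "\<dots> = nat \<bar>Y i j\<bar> * (\<Prod>k\<in>{..<d}-{i}. nat (Y k k))" unfolding R_def by (rule card_R[OF a])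
  finally show ?thesis .
qed

end

lemma diag_pos:
  fixes X :: "nat \<Rightarrow> nat \<Rightarrow> int"
  assumes diag: "\<forall>r<d. \<forall>k<d. r \<noteq> k \<longrightarrow> X r k = 0"
    and nn: "\<forall>k<d. X k k \<ge> 0"
    and rk: "mat_rk d X {..<d} = d"
  shows "\<forall>k<d. X k k > 0"
proof (rule ccontr)
  assume "\<not> (\<forall>k<d. X k k > 0)"
  then obtain k where k: "k < d" "X k k = 0" using nn by force
  have "mat_rk d X {..<d} < d"
  proof (rule rk_lt)
    fix T assume T: "T \<subseteq> {..<d}" "cols_indep d X T"
    have "k \<notin> T"
    proof
      assume kT: "k \<in> T"
      define c :: "nat \<Rightarrow> real" where "c e = (if e = k then 1 else 0)" for e
      have fT: "finite T" using T(1) finite_subset by blast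
      have "\<forall>r<d. (\<Sum>e\<in>T. c e * real_of_int (X r e)) = 0"
      proof (intro allI impI)
        fix r assume r: "r < d"
        have "(\<Sum>e\<in>T. c e * real_of_int (X r e)) = (if k \<in> T then c k * real_of_int (X r k) else 0)"
          by (rule sum_only[OF fT]) (simp add: c_def)
        also have "\<dots> = 0" using diag k r kT by (cases "r = k") (auto simp: c_def)
        finally show "(\<Sum>e\<in>T. c e * real_of_int (X r e)) = 0" .
      qed
      then have "c k = 0" using T(2) kT unfolding cols_indep_def by blast
      then show False by (simp add: c_def)
    qed
    then have "T \<subseteq> {..<d} - {k}" using T(1) by blast
    then have "card T \<le> card ({..<d} - {k})" by (intro card_mono) auto
    then show "card T < d" using k by (simp add: card_Diff_singleton)
  qed simp
  then show False using rk by simp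
qed

theorem lemma3p3:
  fixes d N :: nat and X X' :: "nat \<Rightarrow> nat \<Rightarrow> int"
  assumes "d \<le> N"
    and full_rank: "mat_rk d X {..<N} = d"
    and B_diag: "\<forall>i<d. \<forall>j<d. i \<noteq> j \<longrightarrow> X i j = 0"
    and B_nonneg: "\<forall>i<d. X i i \<ge> 0"
    and B_full_rank: "mat_rk d X {..<d} = d"
    and same_B: "\<forall>i<d. \<forall>j<d. X' i j = X i j"
    and same: "same_arith_matroid d N X X'"
  shows "\<forall>i<d. \<forall>j. d \<le> j \<and> j < N \<longrightarrow> \<bar>X i j\<bar> = \<bar>X' i j\<bar>"
proof (intro allI impI)
  fix i j assume i: "i < d" and jj: "d \<le> j \<and> j < N"
  have j: "d \<le> j" using jj by simp
  have pos: "\<forall>k<d. X k k > 0" by (rule diag_pos[OF B_diag B_nonneg B_full_rank])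
  have diag': "\<forall>r<d. \<forall>k<d. r \<noteq> k \<longrightarrow> X' r k = 0" using B_diag same_B by simp
  have pos': "\<forall>k<d. X' k k > 0" using pos same_B by simp
  have SN: "Sset d i j \<subseteq> {..<N}" using jj i \<open>d \<le> N\<close> by (auto simp: Sset_def)
  have rkeq: "mat_rk d X (Sset d i j) = mat_rk d X' (Sset d i j)"
    and mueq: "mat_mult d X (Sset d i j) = mat_mult d X' (Sset d i j)"
    using same SN unfolding same_arith_matroid_def by blast+
  show "\<bar>X i j\<bar> = \<bar>X' i j\<bar>"
  proof (cases "X i j = 0")
    case True
    show ?thesis
    proof (cases "X' i j = 0")
      case True then show ?thesis using \<open>X i j = 0\<close> by simp
    next
      case False
      have "mat_rk d X (Sset d i j) < d" by (rule rk_S_lt[OF B_diag pos i j \<open>X i j = 0\<close>])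
      moreover have "d \<le> mat_rk d X' (Sset d i j)" by (rule rk_S_ge[OF diag' pos' i j False])
      ultimately show ?thesis using rkeq by simp
    qed
  next
    case False
    show ?thesis
    proof (cases "X' i j = 0")
      case True
      have "mat_rk d X' (Sset d i j) < d" by (rule rk_S_lt[OF diag' pos' i j True])
      moreover have "d \<le> mat_rk d X (Sset d i j)" by (rule rk_S_ge[OF B_diag pos i j False])
      ultimately show ?thesis using rkeq by simp
    next
      case False': False
      define P where "P = (\<Prod>k\<in>{..<d}-{i}. nat (X k k))"
      have P': "(\<Prod>k\<in>{..<d}-{i}. nat (X' k k)) = P" unfolding P_def
        using same_B by (intro prod.cong) auto
      have Ppos: "P > 0" unfolding P_def using pos by (subst prod_pos) auto
      have m1: "mat_mult d X (Sset d i j) = nat \<bar>X i j\<bar> * P"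
        unfolding P_def by (rule mult_S[OF B_diag pos i j False])
      have m2: "mat_mult d X' (Sset d i j) = nat \<bar>X' i j\<bar> * P"
        unfolding P'[symmetric] by (rule mult_S[OF diag' pos' i j False'])
      have "nat \<bar>X i j\<bar> * P = nat \<bar>X' i j\<bar> * P"
        by (simp only: m1[symmetric] m2[symmetric] mueq)
      then have "nat \<bar>X i j\<bar> = nat \<bar>X' i j\<bar>" using Ppos by simp
      then show ?thesis by simp
    qed
  qed
qed

end
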